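(* Let $S$ and $Z$ be finite nonempty alphabets with $\#Z\le\#S$, let $\tau:S\to Z$ be surjective, and let $(\Sigma,\sigma_\tau)$ be the associated full zip shift space. Then $\sigma_\tau$ is an expansive local homeomorphism.
   Context: The zip shift space is $\Sigma=\Sigma_{Z,S}$, the set of bi-infinite sequences $x=(x_i)_{i\in\mathbb{Z}}$ with $x_i\in S$ for $i\ge 0$ and $x_i\in Z$ for $i<0$, with metric $d(x,y)=2^{-M(x,y)}$, $M(x,y)=\min\{|i|: x_i\ne y_i\}$. The zip shift map $\sigma_\tau:\Sigma\to\Sigma$ is given by $(\sigma_\tau x)_i=x_{i+1}$ for $i\ne -1$ and $(\sigma_\tau x)_{-1}=\tau(x_0)$. A continuous map (local homeomorphism) $f:X\to X$ of a compact metric space $(X,d)$ is called expansive with expansivity constant $e>0$ if for any $x\neq y$ in $X$ there exists $n\in\mathbb{Z}$ such that $d(f^n(x),f^n(y))>e$, where for $n<0$, $f^n(x)$ and $f^n(y)$ denote the sets of $|n|$-th preimages and $d$ is taken as the minimum distance between these sets. *)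

theory Defs
  imports "HOL-Analysis.Analysis"
begin

definition zip_space :: "'a set \<Rightarrow> 'a set \<Rightarrow> (int \<Rightarrow> 'a) set" where
  "zip_space Z S = {x. (\<forall>i\<ge>0. x i \<in> S) \<and> (\<forall>i<0. x i \<in> Z)}"

definition zip_M :: "(int \<Rightarrow> 'a) \<Rightarrow> (int \<Rightarrow> 'a) \<Rightarrow> nat" where
  "zip_M x y = (LEAST n. \<exists>i. nat \<bar>i\<bar> = n \<and> x i \<noteq> y i)"

definition zip_dist :: "(int \<Rightarrow> 'a) \<Rightarrow> (int \<Rightarrow> 'a) \<Rightarrow> real" where
  "zip_dist x y = (if x = y then 0 else 2 powr (- real (zip_M x y)))"

definition zip_shift :: "('a \<Rightarrow> 'a) \<Rightarrow> (int \<Rightarrow> 'a) \<Rightarrow> (int \<Rightarrow> 'a)" where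
  "zip_shift \<tau> x = (\<lambda>i. if i = -1 then \<tau> (x 0) else x (i + 1))"

definition local_homeomorphism :: "'a topology \<Rightarrow> ('a \<Rightarrow> 'a) \<Rightarrow> bool" where
  "local_homeomorphism X f \<longleftrightarrow> continuous_map X X f \<and>
     (\<forall>x\<in>topspace X. \<exists>U. openin X U \<and> x \<in> U \<and> openin X (f ` U) \<and>
        homeomorphic_map (subtopology X U) (subtopology X (f ` U)) f)"

text \<open>Expansivity with constant e on the metric space (X,d): for negative times
  the distance is the minimum (infimum) distance between the sets of n-th preimages.\<close>
definition expansive_with :: "'a set \<Rightarrow> ('a \<Rightarrow> 'a \<Rightarrow> real) \<Rightarrow> ('a \<Rightarrow> 'a) \<Rightarrow> real \<Rightarrow> bool" where
  "expansive_with X d f e \<longleftrightarrow> e > 0 \<and>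
     (\<forall>x\<in>X. \<forall>y\<in>X. x \<noteq> y \<longrightarrow>
        (\<exists>n::nat. d ((f ^^ n) x) ((f ^^ n) y) > e) \<or>
        (\<exists>n::nat. n > 0 \<and>
           Inf {d a b | a b. a \<in> X \<and> b \<in> X \<and> (f ^^ n) a = x \<and> (f ^^ n) b = y} > e))"

end

theory Submission
  imports Defs
begin

definition agr :: "nat \<Rightarrow> (int \<Rightarrow> 'a) \<Rightarrow> (int \<Rightarrow> 'a) \<Rightarrow> bool" where
  "agr m x y = (\<forall>i. nat \<bar>i\<bar> < m \<longrightarrow> x i = y i)"

lemma agr_M:
  assumes "x \<noteq> y" shows "agr m x y \<longleftrightarrow> m \<le> zip_M x y"
proof -
  let ?P = "\<lambda>n. \<exists>i. nat \<bar>i\<bar> = n \<and> x i \<noteq> y i"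
  have ex: "\<exists>n. ?P n" using assms by auto
  show ?thesis
  proof
    assume a: "agr m x y"
    show "m \<le> zip_M x y"
    proof (rule ccontr)
      assume "\<not> m \<le> zip_M x y"
      moreover from LeastI_ex[OF ex] obtain i where "nat \<bar>i\<bar> = zip_M x y" "x i \<noteq> y i"
        unfolding zip_M_def by blast
      ultimately show False using a unfolding agr_def by auto
    qed
  next
    assume m: "m \<le> zip_M x y"
    show "agr m x y" unfolding agr_def
    proof (intro allI impI)
      fix i assume i: "nat \<bar>i\<bar> < m"
      show "x i = y i"
      proof (rule ccontr)
        assume "x i \<noteq> y i"
        then have "zip_M x y \<le> nat \<bar>i\<bar>" unfolding zip_M_def by (intro Least_le) auto
        with i m show False by simp
      qed
    qed
  qed
qed

lemma dist_le: "zip_dist x y \<le> 2 powr (- real m) \<longleftrightarrow> agr m x y"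
proof (cases "x = y")
  case True then show ?thesis by (simp add: zip_dist_def agr_def)
next
  case False
  then show ?thesis by (simp add: zip_dist_def agr_M)
qed

lemma dist_less: "zip_dist x y < 2 powr (- real m) \<longleftrightarrow> agr (Suc m) x y"
proof (cases "x = y")
  case True then show ?thesis by (simp add: zip_dist_def agr_def)
next
  case False
  then show ?thesis by (simp add: zip_dist_def agr_M Suc_le_eq)
qed

lemma agr_mono: "agr m x y \<Longrightarrow> k \<le> m \<Longrightarrow> agr k x y"
  unfolding agr_def by auto

lemma agr_trans: "agr m x y \<Longrightarrow> agr m y z \<Longrightarrow> agr m x z"
  unfolding agr_def by auto

lemma zip_M_commute: "zip_M x y = zip_M y x"
  unfolding zip_M_def by metis

lemma metric: "Metric_space X zip_dist"
proof
  fix x y z :: "int \<Rightarrow> 'a"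
  show "0 \<le> zip_dist x y" by (simp add: zip_dist_def)
  show "zip_dist x y = zip_dist y x" by (simp add: zip_dist_def zip_M_commute)
  show "zip_dist x y = 0 \<longleftrightarrow> x = y" by (simp add: zip_dist_def)
  show "zip_dist x z \<le> zip_dist x y + zip_dist y z"
  proof (cases "x = y \<or> y = z")
    case True then show ?thesis by (auto simp: zip_dist_def)
  next
    case False
    define m where "m = min (zip_M x y) (zip_M y z)"
    have "agr m x y" "agr m y z" using False by (auto simp: agr_M m_def)
    then have "zip_dist x z \<le> 2 powr (- real m)" using dist_le agr_trans by blast
    also have "\<dots> \<le> zip_dist x y + zip_dist y z"
      using False by (auto simp: zip_dist_def m_def min_def)
    finally show ?thesis .
  qed
qed

lemma small_pow: "(\<epsilon>::real) > 0 \<Longrightarrow> \<exists>m::nat. 2 powr (- real m) < \<epsilon>"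
proof -
  assume e: "\<epsilon> > 0"
  obtain m :: nat where "1 / \<epsilon> < 2 ^ m" using real_arch_pow[of 2 "1/\<epsilon>"] by auto
  then have "1 / 2 ^ m < \<epsilon>" using e by (simp add: field_simps)
  then show ?thesis by (metis powr_minus_divide powr_realpow zero_less_numeral of_nat_numeral)
qed

lemma cont_agr:
  assumes "A \<subseteq> X" "B \<subseteq> X" "g ` A \<subseteq> B"
    and h: "\<And>m y y'. y \<in> A \<Longrightarrow> y' \<in> A \<Longrightarrow> agr (Suc m) y y' \<Longrightarrow> agr m (g y) (g y')"
  shows "continuous_map (subtopology (Metric_space.mtopology X zip_dist) A)
            (subtopology (Metric_space.mtopology X zip_dist) B) g"
proof -
  interpret MA: Submetric X zip_dist A using assms(1) metric by (simp add: Submetric_def Submetric_axioms_def)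
  interpret MB: Submetric X zip_dist B using assms(2) metric by (simp add: Submetric_def Submetric_axioms_def)
  have "continuous_map (Metric_space.mtopology A zip_dist) (Metric_space.mtopology B zip_dist) g"
  proof (subst MA.sub.metric_continuous_map[OF metric], intro conjI ballI allI impI)
    show "g ` A \<subseteq> B" by fact
    fix a and \<epsilon> :: real assume a: "a \<in> A" and e: "\<epsilon> > 0"
    obtain m where m: "2 powr (- real m) < \<epsilon>" using small_pow[OF e] by blast
    show "\<exists>\<delta>>0. \<forall>x. x \<in> A \<and> zip_dist a x < \<delta> \<longrightarrow> zip_dist (g a) (g x) < \<epsilon>"
    proof (intro exI[of _ "2 powr (- real (Suc m))"] conjI allI impI)
      fix x assume x: "x \<in> A \<and> zip_dist a x < 2 powr (- real (Suc m))"
      then have "agr (Suc (Suc m)) a x" using dist_less by blast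
      then have "agr (Suc m) (g a) (g x)" using h a x by blast
      then have "zip_dist (g a) (g x) < 2 powr (- real m)" using dist_less by blast
      with m show "zip_dist (g a) (g x) < \<epsilon>" by linarith
    qed simp
  qed
  then show ?thesis using MA.mtopology_submetric MB.mtopology_submetric by simp
qed


lemma zip_shift_app: "zip_shift \<tau> x i = (if i = -1 then \<tau> (x 0) else x (i + 1))"
  by (simp add: zip_shift_def)

lemma iter_shift: "(zip_shift \<tau> ^^ n) a j =
   (if - int n \<le> j \<and> j < 0 then \<tau> (a (j + int n)) else a (j + int n))"
proof (induction n arbitrary: j)
  case 0 then show ?case by auto
next
  case (Suc n)
  show ?case
  proof (cases "j = -1")
    case True
    have "(zip_shift \<tau> ^^ Suc n) a j = zip_shift \<tau> ((zip_shift \<tau> ^^ n) a) j" by simp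
    also have "\<dots> = \<tau> ((zip_shift \<tau> ^^ n) a 0)" using True by (simp only: zip_shift_app) simp
    finally show ?thesis using Suc.IH[of 0] True by simp
  next
    case False
    have "(zip_shift \<tau> ^^ Suc n) a j = zip_shift \<tau> ((zip_shift \<tau> ^^ n) a) j" by simp
    also have "\<dots> = (zip_shift \<tau> ^^ n) a (j + 1)" using False by (simp only: zip_shift_app) simp
    finally show ?thesis using Suc.IH[of "j+1"] False by (simp add: algebra_simps) 
  qed
qed

lemma dist_one: "a 0 \<noteq> b 0 \<Longrightarrow> zip_dist a b = 1"
proof -
  assume h: "a 0 \<noteq> b 0"
  then have "a \<noteq> b" by auto
  moreover have "\<not> agr 1 a b" using h by (auto simp: agr_def)
  ultimately have "zip_M a b = 0" using agr_M by fastforce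
  then show ?thesis using \<open>a \<noteq> b\<close> by (simp add: zip_dist_def)
qed

theorem proposition1:
  fixes S Z :: "'a set" and \<tau> :: "'a \<Rightarrow> 'a"
  assumes "finite S" "S \<noteq> {}" "finite Z" "Z \<noteq> {}"
    and "card Z \<le> card S"
    and "\<tau> ` S = Z"
  shows "local_homeomorphism (Metric_space.mtopology (zip_space Z S) zip_dist) (zip_shift \<tau>)
       \<and> (\<exists>e. expansive_with (zip_space Z S) zip_dist (zip_shift \<tau>) e)"
proof
  define X where "X = zip_space Z S"
  define T where "T = Metric_space.mtopology X zip_dist"
  define f where "f = zip_shift \<tau>"
  interpret M: Metric_space X zip_dist by (rule metric)
  have tauS: "\<tau> s \<in> Z" if "s \<in> S" for s using assms(6) that by blast
  have fX: "f ` X \<subseteq> X"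
    by (auto simp: f_def X_def zip_space_def zip_shift_def tauS)
  have fagr: "agr m (f y) (f y')" if "agr (Suc m) y y'" for m y y'
    using that unfolding agr_def f_def zip_shift_def
    by (auto split: if_splits)
  have topX: "topspace T = X" by (simp add: T_def)
  have "continuous_map T T f"
    using cont_agr[of X X X f] fX fagr by (simp add: T_def)
  moreover have "\<exists>U. openin T U \<and> x \<in> U \<and> openin T (f ` U) \<and>
        homeomorphic_map (subtopology T U) (subtopology T (f ` U)) f" if x: "x \<in> X" for x
  proof -
    define U where "U = {y\<in>X. y 0 = x 0}"
    define V where "V = {z\<in>X. z (-1) = \<tau> (x 0)}"
    define g where "g = (\<lambda>z::int\<Rightarrow>'a. \<lambda>i. if i = 0 then x 0 else z (i - 1))"
    have x0: "x 0 \<in> S" using x by (auto simp: X_def zip_space_def)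
    have gV: "g ` V \<subseteq> U"
      using x0 by (auto simp: g_def V_def U_def X_def zip_space_def)
    have fU: "f ` U \<subseteq> V" using fX by (auto simp: U_def V_def f_def zip_shift_def)
    have fg: "f (g z) = z" if "z \<in> V" for z
      using that by (auto simp: f_def g_def zip_shift_def V_def)
    have gf: "g (f y) = y" if "y \<in> U" for y
      using that by (auto simp: f_def g_def zip_shift_def U_def)
    have fUV: "f ` U = V"
      using fU gV fg by (metis image_subset_iff subsetI subset_antisym image_eqI)
    have gagr: "agr m (g z) (g z')" if "agr (Suc m) z z'" for m z z'
      using that unfolding agr_def g_def
      by (auto split: if_splits)
    have oU: "openin T U"
      unfolding T_def M.openin_mtopology
    proof (intro conjI allI impI)
      show "U \<subseteq> X" by (auto simp: U_def)
      fix y assume y: "y \<in> U"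
      show "\<exists>r>0. M.mball y r \<subseteq> U"
      proof (intro exI[of _ 1] conjI subsetI)
        fix z assume "z \<in> M.mball y 1"
        then have "z \<in> X" "zip_dist y z < 2 powr (- real 0)" by auto
        then have "z \<in> X" "agr 1 y z" using dist_less[of y z 0] by auto
        then show "z \<in> U" using y by (auto simp: U_def agr_def)
      qed simp
    qed
    have oV: "openin T V"
      unfolding T_def M.openin_mtopology
    proof (intro conjI allI impI)
      show "V \<subseteq> X" by (auto simp: V_def)
      fix y assume y: "y \<in> V"
      show "\<exists>r>0. M.mball y r \<subseteq> V"
      proof (intro exI[of _ "2 powr (- real 1)"] conjI subsetI)
        fix z assume "z \<in> M.mball y (2 powr (- real 1))"
        then have "z \<in> X" "zip_dist y z < 2 powr (- real 1)" by auto
        then have "z \<in> X" "agr 2 y z" using dist_less[of y z 1] by (auto simp: numeral_2_eq_2)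
        then show "z \<in> V" using y by (auto simp: V_def agr_def)
      qed simp
    qed
    have UX: "U \<subseteq> X" and VX: "V \<subseteq> X" by (auto simp: U_def V_def)
    have "homeomorphic_maps (subtopology T U) (subtopology T V) f g"
      unfolding homeomorphic_maps_def
    proof (intro conjI)
      show "continuous_map (subtopology T U) (subtopology T V) f"
        unfolding T_def by (rule cont_agr[OF UX VX fU]) (rule fagr)
      show "continuous_map (subtopology T V) (subtopology T U) g"
        unfolding T_def by (rule cont_agr[OF VX UX gV]) (rule gagr)
    qed (auto simp: gf fg)
    then have "homeomorphic_map (subtopology T U) (subtopology T (f ` U)) f"
      using fUV homeomorphic_map_maps by blast
    moreover have "x \<in> U" using x by (simp add: U_def)
    ultimately show ?thesis using oU oV fUV by blast
  qed
  ultimately show "local_homeomorphism (Metric_space.mtopology (zip_space Z S) zip_dist) (zip_shift \<tau>)"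
    unfolding local_homeomorphism_def using topX by (simp add: T_def X_def f_def)
next
  define X where "X = zip_space Z S"
  define f where "f = zip_shift \<tau>"
  have "expansive_with X zip_dist f (1/2)"
    unfolding expansive_with_def
  proof (intro conjI ballI impI)
    fix x y assume x: "x \<in> X" and y: "y \<in> X" and xy: "x \<noteq> y"
    show "(\<exists>n. 1/2 < zip_dist ((f ^^ n) x) ((f ^^ n) y)) \<or>
       (\<exists>n>0. 1/2 < Inf {zip_dist a b |a b. a \<in> X \<and> b \<in> X \<and> (f ^^ n) a = x \<and> (f ^^ n) b = y})"
    proof (cases "\<exists>i\<ge>0. x i \<noteq> y i")
      case True
      then obtain i where i: "i \<ge> 0" "x i \<noteq> y i" by blast
      have "(f ^^ nat i) x 0 \<noteq> (f ^^ nat i) y 0" using i by (simp add: f_def iter_shift)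
      then have "zip_dist ((f ^^ nat i) x) ((f ^^ nat i) y) = 1" by (rule dist_one)
      then have "1/2 < zip_dist ((f ^^ nat i) x) ((f ^^ nat i) y)" by simp
      then show ?thesis by blast
    next
      case False
      then obtain i where i: "i < 0" "x i \<noteq> y i" using xy by (metis ext not_less)
      define n where "n = nat (- i)"
      have n: "n > 0" "int n = - i" using i by (auto simp: n_def)
      have key: "zip_dist a b = 1" if "(f ^^ n) a = x" "(f ^^ n) b = y" for a b
      proof (rule dist_one)
        have "\<tau> (a 0) = x i" using that(1)[symmetric] n i by (simp add: f_def iter_shift)
        moreover have "\<tau> (b 0) = y i" using that(2)[symmetric] n i by (simp add: f_def iter_shift)
        ultimately show "a 0 \<noteq> b 0" using i by auto
      qed
      have pre: "\<exists>a\<in>X. (f ^^ n) a = w" if w: "w \<in> X" for w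
      proof -
        define s where "s = inv_into S \<tau>"
        have s: "s z \<in> S" "\<tau> (s z) = z" if "z \<in> Z" for z
          using that assms(6) by (auto simp: s_def inv_into_into f_inv_into_f)
        define a where "a = (\<lambda>k. if 0 \<le> k \<and> k < int n then s (w (k - int n)) else w (k - int n))"
        have wS: "\<And>k. k \<ge> 0 \<Longrightarrow> w k \<in> S" and wZ: "\<And>k. k < 0 \<Longrightarrow> w k \<in> Z"
          using w by (auto simp: X_def zip_space_def)
        have "a \<in> X" unfolding X_def zip_space_def a_def using wS wZ s by auto
        moreover have "(f ^^ n) a = w"
          by (rule ext) (auto simp: f_def iter_shift a_def s wZ)
        ultimately show ?thesis by blast
      qed
      obtain a b where ab: "a \<in> X" "b \<in> X" "(f ^^ n) a = x" "(f ^^ n) b = y"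
        using pre x y by blast
      have "{zip_dist a b |a b. a \<in> X \<and> b \<in> X \<and> (f ^^ n) a = x \<and> (f ^^ n) b = y} = {1}"
      proof (rule subset_antisym)
        show "{zip_dist a b |a b. a \<in> X \<and> b \<in> X \<and> (f ^^ n) a = x \<and> (f ^^ n) b = y} \<subseteq> {1}"
          using key by blast
        have "zip_dist a b = 1" using key ab by blast
        then show "{1} \<subseteq> {zip_dist a b |a b. a \<in> X \<and> b \<in> X \<and> (f ^^ n) a = x \<and> (f ^^ n) b = y}"
          using ab by force
      qed
      then show ?thesis using n by auto
    qed
  qed simp
  then show "\<exists>e. expansive_with (zip_space Z S) zip_dist (zip_shift \<tau>) e"
    by (auto simp: X_def f_def)
qed

end
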